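(* Fix an integer $q\ge 2$. There is a constant $C>0$ depending only on $q$ such that for every $\varepsilon>0$ there exists $n_0$ with the following property. Let $n\ge n_0$, let $t$ be an integer with $60\le t\le 10\sqrt{n}$, and let $S\subseteq[q]^n$ satisfy $\Delta(G[S])\le n^5$. Let \[ S_2 = \left\{v\in S: \sum_{k=1}^{20} \deg_k(v) \ge \frac{\log n}{\varepsilon}\right\}. \] Then $i(G[S_2])\le 2^{C\varepsilon H_q(n,t)}$.
   Context: $d$ is the Hamming distance on $[q]^n$. $V_q(n,r) = \sum_{i=0}^{r}\binom{n}{i}(q-1)^i$ and $H_q(n,t) = q^n / V_q(n,t)$. $G = G_{q,n,t}$ is the graph with vertex set $[q]^n$ in which two distinct vertices are adjacent iff their Hamming distance is at most $2t$; $G[S]$ is its induced subgraph on $S$, $\Delta(\cdot)$ is the maximum degree, and $i(\cdot)$ is the number of independent sets of a graph. For $v\in S$ and $k\ge1$, $\deg_k(v)=|\{u\in S : d(u,v)=k\}|$. $\log$ is the natural logarithm. *)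

theory Defs
  imports Complex_Main
begin

definition cube :: "nat \<Rightarrow> nat \<Rightarrow> nat list set" where
  "cube q n = {xs. length xs = n \<and> set xs \<subseteq> {0..<q}}"

text \<open>Hamming distance (for words of equal length).\<close>
definition hamming :: "nat list \<Rightarrow> nat list \<Rightarrow> nat" where
  "hamming u v = card {i. i < length u \<and> u ! i \<noteq> v ! i}"

definition vol :: "nat \<Rightarrow> nat \<Rightarrow> nat \<Rightarrow> nat" where
  "vol q n r = (\<Sum>i=0..r. (n choose i) * (q - 1) ^ i)"

definition hbound :: "nat \<Rightarrow> nat \<Rightarrow> nat \<Rightarrow> real" where
  "hbound q n t = real (q ^ n) / real (vol q n t)"

definition adjG :: "nat \<Rightarrow> nat list \<Rightarrow> nat list \<Rightarrow> bool" where
  "adjG t u v \<longleftrightarrow> u \<noteq> v \<and> hamming u v \<le> 2 * t"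

definition max_deg :: "nat \<Rightarrow> nat list set \<Rightarrow> nat" where
  "max_deg t S = (if S = {} then 0 else Max ((\<lambda>v. card {u \<in> S. adjG t u v}) ` S))"

definition degk :: "nat list set \<Rightarrow> nat \<Rightarrow> nat list \<Rightarrow> nat" where
  "degk S k v = card {u \<in> S. hamming u v = k}"

definition indep_sets :: "nat \<Rightarrow> nat list set \<Rightarrow> nat list set set" where
  "indep_sets t S = {I. I \<subseteq> S \<and> (\<forall>u\<in>I. \<forall>v\<in>I. \<not> adjG t u v)}"

definition num_indep :: "nat \<Rightarrow> nat list set \<Rightarrow> nat" where
  "num_indep t S = card (indep_sets t S)"

end

theory Submission
  imports Defs "HOL-Real_Asymp.Real_Asymp"
begin


lemma hamming_Nil[simp]: "hamming [] w = 0"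
  by (simp add: hamming_def)

lemma hamming_Cons: "hamming (a#u) (b#w) = (if a = b then 0 else 1) + hamming u w"
proof -
  have eq: "{i. i < length (a#u) \<and> (a#u)!i \<noteq> (b#w)!i} =
     (if a = b then {} else {0}) \<union> Suc ` {i. i < length u \<and> u!i \<noteq> w!i}"
  proof (rule set_eqI)
    fix i show "i \<in> {i. i < length (a#u) \<and> (a#u)!i \<noteq> (b#w)!i} \<longleftrightarrow>
      i \<in> (if a = b then {} else {0}) \<union> Suc ` {i. i < length u \<and> u!i \<noteq> w!i}"
      by (cases i) auto
  qed
  have "card (Suc ` {i. i < length u \<and> u!i \<noteq> w!i}) = hamming u w"
    by (simp add: card_image hamming_def)
  moreover have "finite (Suc ` {i. i < length u \<and> u!i \<noteq> w!i})" by simp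
  ultimately show ?thesis unfolding hamming_def[of "a#u"] eq
    by (auto simp: card_Un_disjoint)
qed

lemma hamming_sym: "length u = length w \<Longrightarrow> hamming u w = hamming w u"
  by (induction u w rule: list_induct2) (auto simp: hamming_Cons)

lemma hamming_tri: "length u = length v \<Longrightarrow> length v = length w \<Longrightarrow>
   hamming u w \<le> hamming u v + hamming v w"
  by (induction u v w rule: list_induct3) (auto simp: hamming_Cons)

lemma hamming_0: "length u = length w \<Longrightarrow> hamming u w = 0 \<longleftrightarrow> u = w"
  by (induction u w rule: list_induct2) (auto simp: hamming_Cons)

lemma cube_len: "x \<in> cube q n \<Longrightarrow> length x = n"
  by (simp add: cube_def)

lemma finite_cube: "finite (cube q n)"
proof -
  have "cube q n = {xs. set xs \<subseteq> {0..<q} \<and> length xs = n}" by (auto simp: cube_def)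
  thus ?thesis using finite_lists_length_eq[of "{0..<q}" n] by simp
qed

lemma card_cube: "card (cube q n) = q ^ n"
proof -
  have "cube q n = {xs. set xs \<subseteq> {0..<q} \<and> length xs = n}" by (auto simp: cube_def)
  thus ?thesis using card_lists_length_eq[of "{0..<q}" n] by simp
qed

lemma cube_0: "cube q 0 = {[]}" by (auto simp: cube_def)

lemma cube_Cons: "(c # x \<in> cube q (Suc n)) \<longleftrightarrow> c < q \<and> x \<in> cube q n"
  by (auto simp: cube_def)

lemma card_cube_Suc:
  "card {x \<in> cube q (Suc n). P x} = (\<Sum>c<q. card {x \<in> cube q n. P (c # x)})"
proof -
  have eq: "{x \<in> cube q (Suc n). P x} = (\<Union>c\<in>{..<q}. (\<lambda>x. c # x) ` {x \<in> cube q n. P (c # x)})"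
  proof (rule set_eqI, rule iffI)
    fix x assume "x \<in> {x \<in> cube q (Suc n). P x}"
    then obtain c y where "x = c # y" by (cases x) (auto simp: cube_def)
    thus "x \<in> (\<Union>c\<in>{..<q}. (\<lambda>x. c # x) ` {x \<in> cube q n. P (c # x)})"
      using \<open>x \<in> _\<close> by (auto simp: cube_Cons)
  qed (auto simp: cube_Cons)
  have "card {x \<in> cube q (Suc n). P x} = (\<Sum>c<q. card ((\<lambda>x. c # x) ` {x \<in> cube q n. P (c # x)}))"
    unfolding eq by (rule card_UN_disjoint) (auto intro: finite_subset[OF _ finite_cube])
  also have "\<dots> = (\<Sum>c<q. card {x \<in> cube q n. P (c # x)})"
    by (rule sum.cong) (auto simp: card_image)
  finally show ?thesis .
qed

lemma vol_0n: "vol q 0 r = 1"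
proof -
  have "vol q 0 r = (\<Sum>i\<in>{0..r}. if i = 0 then 1 else 0)"
    unfolding vol_def by (rule sum.cong) auto
  thus ?thesis by simp
qed

lemma vol_n0: "vol q n 0 = 1" by (simp add: vol_def)

lemma vol_Suc: "vol q (Suc n) (Suc r) = vol q n (Suc r) + (q - 1) * vol q n r"
proof -
  have "vol q (Suc n) (Suc r) = 1 + (\<Sum>i\<in>{0..r}. (Suc n choose Suc i) * (q-1)^Suc i)"
    unfolding vol_def by (subst sum.atLeast0_atMost_Suc_shift) simp
  also have "\<dots> = 1 + (\<Sum>i\<in>{0..r}. (n choose Suc i) * (q-1)^Suc i) + (q-1) * (\<Sum>i\<in>{0..r}. (n choose i) * (q-1)^i)"
  proof -
    have "(\<Sum>i\<in>{0..r}. (Suc n choose Suc i) * (q-1)^Suc i) =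
      (\<Sum>i\<in>{0..r}. (n choose Suc i) * (q-1)^Suc i + (q-1) * ((n choose i) * (q-1)^i))"
      by (rule sum.cong) (simp_all add: add_mult_distrib)
    thus ?thesis by (simp add: sum.distrib sum_distrib_left)
  qed
  also have "1 + (\<Sum>i\<in>{0..r}. (n choose Suc i) * (q-1)^Suc i) = vol q n (Suc r)"
    unfolding vol_def sum.atLeast0_atMost_Suc_shift by simp
  finally show ?thesis by (simp add: vol_def)
qed

lemma vol_mono_n: "vol q n r \<le> vol q (Suc n) r"
  by (cases r) (simp_all add: vol_n0 vol_Suc)

lemma vol_mono_r: "r \<le> r' \<Longrightarrow> vol q n r \<le> vol q n r'"
  unfolding vol_def by (rule sum_mono2) auto



lemma card_split_a:
  fixes q :: nat
  assumes "a < q"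
  shows "(\<Sum>c<q. f c) = f a + (\<Sum>c\<in>{..<q}-{a}. (f c :: nat))"
  using assms by (subst sum.remove[where x=a]) auto

lemma ball_card:
  "u \<in> cube q n \<Longrightarrow> card {x \<in> cube q n. hamming x u \<le> r} = vol q n r"
proof (induction n arbitrary: u r)
  case 0
  then have "{x \<in> cube q 0. hamming x u \<le> r} = {[]}" by (auto simp: cube_0)
  then show ?case by (simp add: vol_0n)
next
  case (Suc n)
  then obtain a u' where u: "u = a # u'" "a < q" "u' \<in> cube q n"
    by (cases u) (auto simp: cube_def)
  have "card {x \<in> cube q (Suc n). hamming x u \<le> r} =
     (\<Sum>c<q. card {x \<in> cube q n. (if c = a then 0 else 1) + hamming x u' \<le> r})"
    unfolding card_cube_Suc u hamming_Cons ..
  also have "\<dots> = card {x \<in> cube q n. hamming x u' \<le> r} +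
      (\<Sum>c\<in>{..<q}-{a}. card {x \<in> cube q n. 1 + hamming x u' \<le> r})"
    by (subst card_split_a[OF u(2)]) (auto intro!: sum.cong)
  also have "\<dots> = vol q (Suc n) r"
  proof (cases r)
    case 0
    then show ?thesis using Suc.IH[OF u(3), of 0] by (simp add: vol_n0)
  next
    case (Suc r')
    have "{x \<in> cube q n. 1 + hamming x u' \<le> r} = {x \<in> cube q n. hamming x u' \<le> r'}"
      using Suc by auto
    then show ?thesis using Suc.IH[OF u(3)] u(2) Suc by (simp add: vol_Suc)
  qed
  finally show ?case .
qed

lemma pair_card:
  "u \<in> cube q n \<Longrightarrow> w \<in> cube q n \<Longrightarrow>
   card {x \<in> cube q n. hamming x u + hamming x w \<le> s} \<le> q ^ hamming u w * vol q n ((s - hamming u w) div 2)"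
proof (induction n arbitrary: u w s)
  case 0
  then show ?case by (simp add: cube_0 vol_0n card_le_Suc0_iff_eq)
next
  case (Suc n)
  from Suc.prems obtain a u' where u: "u = a # u'" "a < q" "u' \<in> cube q n"
    by (cases u) (auto simp: cube_def)
  from Suc.prems obtain b w' where w: "w = b # w'" "b < q" "w' \<in> cube q n"
    by (cases w) (auto simp: cube_def)
  have lu: "length u' = n" "length w' = n" using u w by (auto simp: cube_len)
  let ?F = "\<lambda>k. {x \<in> cube q n. k + (hamming x u' + hamming x w') \<le> s}"
  have eq: "card {x \<in> cube q (Suc n). hamming x u + hamming x w \<le> s} =
     (\<Sum>c<q. card (?F ((if c = a then 0 else 1) + (if c = b then 0 else 1))))"
    unfolding card_cube_Suc u w hamming_Cons by (rule sum.cong) (auto simp: algebra_simps)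
  show ?case
  proof (cases "a = b")
    case True
    have d: "hamming u w = hamming u' w'" using True u w by (simp add: hamming_Cons)
    let ?d = "hamming u' w'"
    have "card {x \<in> cube q (Suc n). hamming x u + hamming x w \<le> s} =
      card (?F 0) + (\<Sum>c\<in>{..<q}-{a}. card (?F 2))"
      unfolding eq using True by (subst card_split_a[OF u(2)]) (auto intro!: sum.cong)
    also have "\<dots> = card (?F 0) + (q - 1) * card (?F 2)"
      using u(2) by simp
    also have "\<dots> \<le> q ^ ?d * vol q (Suc n) ((s - ?d) div 2)"
    proof (cases "s \<ge> ?d + 2")
      case True
      have f0: "card (?F 0) \<le> q ^ ?d * vol q n ((s - ?d) div 2)"
        using Suc.IH[OF u(3) w(3), of s] by simp
      have "?F 2 = {x \<in> cube q n. hamming x u' + hamming x w' \<le> s - 2}" using True by auto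
      hence f2: "card (?F 2) \<le> q ^ ?d * vol q n ((s - 2 - ?d) div 2)"
        using Suc.IH[OF u(3) w(3), of "s-2"] by simp
      have sd: "s - ?d = (s - 2 - ?d) + 2" using True by arith
      define j where "j = (s - 2 - ?d) div 2"
      have j1: "(s - ?d) div 2 = Suc j"
        unfolding j_def by (subst sd, simp)
      have j: "(s - ?d) div 2 = Suc j" "(s - 2 - ?d) div 2 = j"
        using j1 j_def by auto
      have "card (?F 0) + (q - 1) * card (?F 2) \<le>
         q ^ ?d * vol q n (Suc j) + (q - 1) * (q ^ ?d * vol q n j)"
        using f0 f2 j by (intro add_mono mult_le_mono) auto
      also have "\<dots> = q ^ ?d * vol q (Suc n) (Suc j)" by (simp add: vol_Suc algebra_simps)
      finally show ?thesis using j by simp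
    next
      case False
      have F2e: "?F 2 = {}"
      proof -
        { fix x assume "x \<in> ?F 2"
          hence "?d \<le> hamming x u' + hamming x w'"
            using hamming_tri[of u' x w'] hamming_sym[of u' x] lu by (auto simp: cube_len)
          with \<open>x \<in> ?F 2\<close> False have False by auto }
        thus ?thesis by blast
      qed
      hence "card (?F 0) + (q - 1) * card (?F 2) = card (?F 0)" by (simp only: card.empty)
      also have "\<dots> \<le> q ^ ?d * vol q n ((s - ?d) div 2)"
        using Suc.IH[OF u(3) w(3), of s] by simp
      also have "\<dots> \<le> q ^ ?d * vol q (Suc n) ((s - ?d) div 2)"
        by (intro mult_le_mono vol_mono_n) auto
      finally show ?thesis .
    qed
    finally show ?thesis using d by simp
  next
    case False
    have d: "hamming u w = Suc (hamming u' w')" using False u w by (simp add: hamming_Cons)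
    let ?d = "hamming u' w'"
    have "\<And>c. card (?F ((if c = a then 0 else 1) + (if c = b then 0 else 1))) \<le> card (?F 1)"
      using False by (intro card_mono) (auto intro: finite_subset[OF _ finite_cube])
    hence "card {x \<in> cube q (Suc n). hamming x u + hamming x w \<le> s} \<le> (\<Sum>c<q. card (?F 1))"
      unfolding eq by (intro sum_mono) auto
    also have "\<dots> = q * card (?F 1)" by simp
    also have "card (?F 1) \<le> card {x \<in> cube q n. hamming x u' + hamming x w' \<le> s - 1}"
      by (intro card_mono) (auto intro: finite_subset[OF _ finite_cube])
    hence "q * card (?F 1) \<le> q * (q ^ ?d * vol q n ((s - 1 - ?d) div 2))"
      using Suc.IH[OF u(3) w(3), of "s-1"] by (simp del: One_nat_def)
    also have "\<dots> \<le> q ^ Suc ?d * vol q (Suc n) ((s - Suc ?d) div 2)"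
      using vol_mono_n[of q n "(s - Suc ?d) div 2"] by (simp add: algebra_simps)
    finally show ?thesis using d by simp
  qed
qed



lemma card_filter_sum: "finite A \<Longrightarrow> card {a\<in>A. P a} = (\<Sum>a\<in>A. if P a then 1 else (0::nat))"
  unfolding card_eq_sum by (rule sum.inter_filter)

lemma vol_ratio:
  assumes "q \<ge> 2" "t \<ge> 1"
  shows "(n - t) * vol q n (t - 1) \<le> t * vol q n t"
proof -
  obtain t' where t: "t = Suc t'" using assms by (cases t) auto
  have "(n - t) * vol q n t' = (\<Sum>i=0..t'. (n - t) * ((n choose i) * (q-1)^i))"
    by (simp add: vol_def sum_distrib_left)
  also have "\<dots> \<le> (\<Sum>i=0..t'. t * ((n choose Suc i) * (q-1)^Suc i))"
  proof (rule sum_mono)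
    fix i assume "i \<in> {0..t'}"
    hence i: "i \<le> t'" by simp
    have "n - t \<le> n - i" using i t by simp
    hence "(n - t) * ((n choose i) * (q-1)^i) \<le> (n - i) * (n choose i) * (q-1)^i"
      by (simp add: mult.assoc mult_le_mono1)
    also have "\<dots> = Suc i * (n choose Suc i) * (q-1)^i"
    proof -
      have "(n - i) * (n choose i) = Suc i * (n choose Suc i)"
        by (simp only: binomial_absorption binomial_absorb_comp)
      thus ?thesis by simp
    qed
    also have "\<dots> \<le> t * (n choose Suc i) * (q-1)^Suc i"
    proof -
      have "(q-1)^i \<le> (q-1)^Suc i" using assms
        by (intro power_increasing) auto
      thus ?thesis using i t by (intro mult_le_mono) auto
    qed
    finally show "(n - t) * ((n choose i) * (q-1)^i) \<le> t * ((n choose Suc i) * (q-1)^Suc i)"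
      by (simp add: algebra_simps)
  qed
  also have "\<dots> = t * (\<Sum>i=0..t'. (n choose Suc i) * (q-1)^Suc i)"
    by (simp add: sum_distrib_left)
  also have "\<dots> \<le> t * vol q n t"
    unfolding t vol_def sum.atLeast0_atMost_Suc_shift by simp
  finally show ?thesis using t by simp
qed

lemma vol_small: "n * q \<ge> 1 \<Longrightarrow> vol q n r \<le> Suc r * (n * q) ^ r"
proof -
  assume nq: "n * q \<ge> 1"
  have "vol q n r \<le> (\<Sum>i=0..r. (n * q) ^ r)"
    unfolding vol_def
  proof (rule sum_mono)
    fix i assume "i \<in> {0..r}"
    have "(n choose i) \<le> n ^ i"
      by (cases "i \<le> n") (auto simp: binomial_le_pow binomial_eq_0)
    moreover have "(q - 1) ^ i \<le> q ^ i" by (simp add: power_mono)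
    ultimately have "(n choose i) * (q-1)^i \<le> (n * q) ^ i"
      by (simp add: power_mult_distrib mult_le_mono)
    also have "\<dots> \<le> (n * q) ^ r" using nq \<open>i \<in> {0..r}\<close> by (intro power_increasing) auto
    finally show "(n choose i) * (q-1)^i \<le> (n * q) ^ r" .
  qed
  thus ?thesis by simp
qed

lemma vol_lower: "q \<ge> 2 \<Longrightarrow> (n choose t) \<le> vol q n t"
proof -
  assume q: "q \<ge> 2"
  have "(n choose t) \<le> (n choose t) * (q-1)^t" using q by simp
  also have "\<dots> \<le> vol q n t" unfolding vol_def
    by (rule member_le_sum[where f="\<lambda>i. (n choose i) * (q-1)^i"]) auto
  finally show ?thesis .
qed

lemma union_lower:
  assumes "finite F" "\<And>i. i \<in> F \<Longrightarrow> finite (A i)"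
  shows "(\<Sum>i\<in>F. card (A i)) \<le> card (\<Union>i\<in>F. A i) + (\<Sum>i\<in>F. \<Sum>j\<in>F-{i}. card (A i \<inter> A j))"
  using assms
proof (induction F rule: finite_induct)
  case empty
  then show ?case by simp
next
  case (insert a F)
  let ?U = "\<Union>i\<in>F. A i"
  have fU: "finite ?U" using insert by auto
  have "card (A a) + card ?U = card (A a \<union> ?U) + card (A a \<inter> ?U)"
    using insert fU by (intro card_Un_Int) auto
  moreover have "card (A a \<inter> ?U) \<le> (\<Sum>j\<in>F. card (A a \<inter> A j))"
  proof -
    have "A a \<inter> ?U = (\<Union>j\<in>F. A a \<inter> A j)" by auto
    thus ?thesis using card_UN_le[OF insert(1), of "\<lambda>j. A a \<inter> A j"] by simp
  qed
  moreover have "(\<Sum>i\<in>F. \<Sum>j\<in>F-{i}. card (A i \<inter> A j)) \<le> (\<Sum>i\<in>F. \<Sum>j\<in>insert a F-{i}. card (A i \<inter> A j))"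
    using insert by (intro sum_mono sum_mono2) auto
  moreover have "(\<Sum>i\<in>insert a F. \<Sum>j\<in>insert a F-{i}. card (A i \<inter> A j)) =
     (\<Sum>j\<in>F. card (A a \<inter> A j)) + (\<Sum>i\<in>F. \<Sum>j\<in>insert a F-{i}. card (A i \<inter> A j))"
    using insert by (simp add: insert_Diff_if)
  moreover have "(\<Sum>i\<in>insert a F. card (A i)) = card (A a) + (\<Sum>i\<in>F. card (A i))"
    using insert by simp
  moreover have "(\<Union>i\<in>insert a F. A i) = A a \<union> ?U" by auto
  moreover have "(\<Sum>i\<in>F. card (A i)) \<le> card ?U + (\<Sum>i\<in>F. \<Sum>j\<in>F-{i}. card (A i \<inter> A j))"
    using insert.IH insert.prems by auto
  ultimately have "(\<Sum>i\<in>insert a F. card (A i)) \<le> card (A a \<union> ?U) +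
       (\<Sum>i\<in>insert a F. \<Sum>j\<in>insert a F-{i}. card (A i \<inter> A j))" by linarith
  moreover have "card (\<Union>i\<in>insert a F. A i) = card (A a \<union> ?U)"
    by (metis \<open>(\<Union>i\<in>insert a F. A i) = A a \<union> ?U\<close>)
  ultimately show ?case by simp
qed

lemma pow_sum: "finite A \<Longrightarrow> (\<Sum>I\<in>Pow A. (x::real) ^ card I) = (1 + x) ^ card A"
proof (induction A rule: finite_induct)
  case empty
  then show ?case by simp
next
  case (insert a A)
  have fin: "finite (Pow A)" using insert by simp
  have disj: "Pow A \<inter> insert a ` Pow A = {}" using insert by auto
  have inj: "inj_on (insert a) (Pow A)"
    by (intro inj_onI) (metis Diff_insert_absorb PowD insert.hyps(2) subsetD)
  have "(\<Sum>I\<in>Pow (insert a A). x ^ card I) = (\<Sum>I\<in>Pow A. x ^ card I) + (\<Sum>I\<in>insert a ` Pow A. x ^ card I)"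
    unfolding Pow_insert using fin disj by (intro sum.union_disjoint) auto
  also have "(\<Sum>I\<in>insert a ` Pow A. x ^ card I) = (\<Sum>I\<in>Pow A. x ^ card (insert a I))"
    using inj by (simp add: sum.reindex)
  also have "\<dots> = (\<Sum>I\<in>Pow A. x * x ^ card I)"
  proof (rule sum.cong)
    fix I assume "I \<in> Pow A"
    hence "finite I" "a \<notin> I" using insert finite_subset by auto
    thus "x ^ card (insert a I) = x * x ^ card I" by simp
  qed simp
  finally show ?case using insert by (simp add: sum_distrib_left[symmetric] algebra_simps)
qed

lemma deg_le_max: "finite S \<Longrightarrow> s \<in> S \<Longrightarrow> card {u \<in> S. adjG t u s} \<le> max_deg t S"
  unfolding max_deg_def by (auto intro!: Max_ge)

lemma ball_S:
  assumes "S \<subseteq> cube q n" "x \<in> cube q n"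
  shows "card {s \<in> S. hamming x s \<le> t} \<le> max_deg t S + 1"
proof (cases "{s \<in> S. hamming x s \<le> t} = {}")
  case True
  show ?thesis by (simp only: True) simp
next
  case False
  then obtain s0 where s0: "s0 \<in> S" "hamming x s0 \<le> t" by auto
  have fS: "finite S" using assms finite_subset finite_cube by blast
  have "{s \<in> S. hamming x s \<le> t} \<subseteq> insert s0 {u \<in> S. adjG t u s0}"
  proof
    fix u assume u: "u \<in> {s \<in> S. hamming x s \<le> t}"
    have l: "length u = n" "length x = n" "length s0 = n" using u s0 assms by (auto simp: cube_len)
    have "hamming u s0 \<le> hamming u x + hamming x s0" using l by (intro hamming_tri) auto
    also have "hamming u x = hamming x u" using l hamming_sym by auto
    finally have "hamming u s0 \<le> 2 * t" using u s0 by auto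
    thus "u \<in> insert s0 {u \<in> S. adjG t u s0}" using u by (auto simp: adjG_def)
  qed
  hence "card {s \<in> S. hamming x s \<le> t} \<le> card (insert s0 {u \<in> S. adjG t u s0})"
    using fS by (intro card_mono) auto
  also have "\<dots> \<le> Suc (card {u \<in> S. adjG t u s0})" by (rule card_insert_le_m1) auto
  also have "\<dots> \<le> max_deg t S + 1" using deg_le_max[OF fS s0(1)] by simp
  finally show ?thesis .
qed

lemma S_size:
  assumes "S \<subseteq> cube q n"
  shows "card S * vol q n t \<le> q ^ n * (max_deg t S + 1)"
proof -
  have fS: "finite S" using assms finite_subset finite_cube by blast
  have "card S * vol q n t = (\<Sum>s\<in>S. card {x \<in> cube q n. hamming x s \<le> t})"
    using assms by (simp add: ball_card subset_iff)
  also have "\<dots> = (\<Sum>s\<in>S. \<Sum>x\<in>cube q n. if hamming x s \<le> t then 1 else 0)"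
    by (simp add: card_filter_sum finite_cube)
  also have "\<dots> = (\<Sum>x\<in>cube q n. \<Sum>s\<in>S. if hamming x s \<le> t then 1 else 0)"
    by (rule sum.swap)
  also have "\<dots> = (\<Sum>x\<in>cube q n. card {s \<in> S. hamming x s \<le> t})"
    by (simp add: card_filter_sum fS)
  also have "\<dots> \<le> (\<Sum>x\<in>cube q n. max_deg t S + 1)"
    using assms by (intro sum_mono ball_S) auto
  also have "\<dots> = q ^ n * (max_deg t S + 1)" by (simp add: card_cube)
  finally show ?thesis .
qed



definition Ball :: "nat \<Rightarrow> nat \<Rightarrow> nat \<Rightarrow> nat list \<Rightarrow> nat list set" where
  "Ball q n t u = {x \<in> cube q n. hamming x u \<le> t}"

lemma ov_pair:
  assumes "u \<in> cube q n" "w \<in> cube q n"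
  shows "card (Ball q n t u \<inter> Ball q n t w) \<le> q ^ hamming u w * vol q n ((2*t - hamming u w) div 2)"
proof -
  have "card (Ball q n t u \<inter> Ball q n t w) \<le> card {x \<in> cube q n. hamming x u + hamming x w \<le> 2*t}"
    by (intro card_mono) (auto simp: Ball_def intro: finite_subset[OF _ finite_cube])
  also have "\<dots> \<le> q ^ hamming u w * vol q n ((2*t - hamming u w) div 2)"
    by (rule pair_card[OF assms])
  finally show ?thesis .
qed

lemma ov_far:
  assumes "u \<in> cube q n" "w \<in> cube q n" "hamming u w > 2*t"
  shows "Ball q n t u \<inter> Ball q n t w = {}"
proof -
  { fix x assume x: "x \<in> Ball q n t u \<inter> Ball q n t w"
    have l: "length u = n" "length w = n" "length x = n" using assms x by (auto simp: cube_len Ball_def)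
    have "hamming u w \<le> hamming u x + hamming x w" using l by (intro hamming_tri) auto
    also have "hamming u x = hamming x u" using l hamming_sym by auto
    finally have False using x assms(3) by (auto simp: Ball_def) }
  thus ?thesis by blast
qed

lemma indep_bound:
  fixes q n t m D :: nat and S I :: "nat list set"
  assumes q: "q \<ge> 2" and S: "S \<subseteq> cube q n" and t: "t \<ge> 21"
    and I: "I \<subseteq> S" "\<And>u v. u \<in> I \<Longrightarrow> v \<in> I \<Longrightarrow> \<not> adjG t u v"
    and m: "\<And>v. v \<in> I \<Longrightarrow> m \<le> card {u\<in>S. 1 \<le> hamming u v \<and> hamming u v \<le> 20}"
    and c1: "4 * m * q^40 * vol q n (t-1) \<le> vol q n t"
    and c2: "4 * max_deg t S * q^(2*t) * vol q n 20 \<le> vol q n t"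
  shows "card I * m * vol q n t \<le> 2 * q^n"
proof -
  have fS: "finite S" using S finite_subset finite_cube by blast
  have fI: "finite I" using I(1) fS finite_subset by blast
  define A where "A v = {u\<in>S. 1 \<le> hamming u v \<and> hamming u v \<le> 20}" for v
  have "\<forall>v\<in>I. \<exists>Bv. Bv \<subseteq> A v \<and> card Bv = m"
  proof
    fix v assume "v \<in> I"
    then obtain Bv where "Bv \<subseteq> A v" "card Bv = m" using m[of v] A_def
      by (metis obtain_subset_with_card_n)
    thus "\<exists>Bv. Bv \<subseteq> A v \<and> card Bv = m" by blast
  qed
  then obtain B where B: "\<And>v. v \<in> I \<Longrightarrow> B v \<subseteq> A v" "\<And>v. v \<in> I \<Longrightarrow> card (B v) = m"
    by metis
  have fB: "\<And>v. v \<in> I \<Longrightarrow> finite (B v)" using B(1) fS A_def finite_subset by fastforce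
  have Bcube: "\<And>v u. v \<in> I \<Longrightarrow> u \<in> B v \<Longrightarrow> u \<in> cube q n \<and> u \<in> S \<and> 1 \<le> hamming u v \<and> hamming u v \<le> 20"
    using B(1) S A_def by blast
  have Icube: "\<And>v. v \<in> I \<Longrightarrow> v \<in> cube q n" using I S by blast
  have len: "\<And>x. x \<in> cube q n \<Longrightarrow> length x = n" by (rule cube_len)
  have far: "hamming v w > 2*t" if "v \<in> I" "w \<in> I" "v \<noteq> w" for v w
    using I(2)[OF that(1,2)] that(3) by (auto simp: adjG_def)
  have tri: "hamming a c \<le> hamming a b + hamming b c" if "a \<in> cube q n" "b \<in> cube q n" "c \<in> cube q n" for a b c
    using that len by (intro hamming_tri) auto
  have sym: "hamming a b = hamming b a" if "a \<in> cube q n" "b \<in> cube q n" for a b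
    using that len by (intro hamming_sym) auto
  have disj: "B v \<inter> B w = {}" if "v \<in> I" "w \<in> I" "v \<noteq> w" for v w
  proof -
    { fix u assume u: "u \<in> B v" "u \<in> B w"
      have "hamming v w \<le> hamming v u + hamming u w" using u that Bcube Icube by (intro tri) auto
      also have "hamming v u = hamming u v" using u that Bcube Icube sym by auto
      moreover have "hamming u v \<le> 20" "hamming u w \<le> 20" using Bcube u that by auto
      ultimately have "hamming v w \<le> 40" by linarith
      with far[OF that] t have False by auto }
    thus ?thesis by blast
  qed
  define T where "T = (\<Union>v\<in>I. B v)"
  have fT: "finite T" using fI fB T_def by auto
  have cardT: "card T = card I * m"
    unfolding T_def using fI fB disj B(2) by (subst card_UN_disjoint) auto
  have Tcube: "T \<subseteq> cube q n" using Bcube T_def by blast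
  define a where "a = q^40 * vol q n (t-1)"
  define b where "b = q^(2*t) * vol q n 20"
  define D where "D = max_deg t S"
  have inner: "(\<Sum>u'\<in>T-{u}. card (Ball q n t u \<inter> Ball q n t u')) \<le> m * a + D * b" if uT: "u \<in> T" for u
  proof -
    obtain v where v: "v \<in> I" "u \<in> B v" using uT T_def by blast
    have uc: "u \<in> cube q n" "u \<in> S" using v Bcube by auto
    let ?ov = "\<lambda>u'. card (Ball q n t u \<inter> Ball q n t u')"
    have split: "T - {u} = (B v - {u}) \<union> (T - B v)" using v T_def by auto
    have "(\<Sum>u'\<in>T-{u}. ?ov u') = (\<Sum>u'\<in>B v - {u}. ?ov u') + (\<Sum>u'\<in>T - B v. ?ov u')"
      unfolding split using fT fB[OF v(1)] by (intro sum.union_disjoint) auto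
    also have "(\<Sum>u'\<in>B v - {u}. ?ov u') \<le> (\<Sum>u'\<in>B v - {u}. a)"
    proof (rule sum_mono)
      fix u' assume u': "u' \<in> B v - {u}"
      have u'c: "u' \<in> cube q n" using u' v Bcube by auto
      let ?d = "hamming u u'"
      have "?d \<noteq> 0" using u' hamming_0[of u u'] len uc u'c by auto
      moreover have "?d \<le> 40"
      proof -
        have "?d \<le> hamming u v + hamming v u'" using uc u'c v Icube by (intro tri) auto
        also have "hamming v u' = hamming u' v" using u'c v Icube sym by auto
        moreover have "hamming u v \<le> 20" "hamming u' v \<le> 20" using Bcube u' v by auto
        ultimately show ?thesis by linarith
      qed
      ultimately have "q ^ ?d \<le> q^40" "(2*t - ?d) div 2 \<le> t - 1" using q
        by (auto intro: power_increasing)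
      hence "q ^ ?d * vol q n ((2*t - ?d) div 2) \<le> a"
        unfolding a_def by (intro mult_le_mono vol_mono_r) auto
      thus "?ov u' \<le> a" using ov_pair[OF uc(1) u'c, of t] by linarith
    qed
    also have "\<dots> \<le> m * a"
    proof -
      have "card (B v - {u}) \<le> m" using B(2)[OF v(1)] fB[OF v(1)] by (metis card_Diff1_le)
      thus ?thesis by simp
    qed
    also have "(\<Sum>u'\<in>T - B v. ?ov u') \<le> (\<Sum>u'\<in>T - B v. if u' \<in> {y\<in>S. adjG t y u} then b else 0)"
    proof (rule sum_mono)
      fix u' assume u': "u' \<in> T - B v"
      then obtain w where w: "w \<in> I" "u' \<in> B w" "w \<noteq> v" using T_def by blast
      have u'c: "u' \<in> cube q n" "u' \<in> S" using w Bcube by auto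
      let ?d = "hamming u u'"
      show "?ov u' \<le> (if u' \<in> {y\<in>S. adjG t y u} then b else 0)"
      proof (cases "?d > 2*t")
        case True
        then show ?thesis using ov_far[OF uc(1) u'c(1) True] by simp
      next
        case False
        have "u' \<noteq> u" using u' v by auto
        moreover have "hamming u' u \<le> 2*t" using False sym uc u'c by auto
        ultimately have adj: "u' \<in> {y\<in>S. adjG t y u}" using u'c by (auto simp: adjG_def)
        have "hamming v w \<le> hamming v u + hamming u w" using v w Icube uc by (intro tri) auto
        also have "hamming u w \<le> hamming u u' + hamming u' w" using w Icube uc u'c by (intro tri) auto
        also have "hamming v u = hamming u v" using v Icube uc sym by auto
        finally have "hamming v w \<le> hamming u v + ?d + hamming u' w" by simp
        moreover have "hamming u v \<le> 20" "hamming u' w \<le> 20" using Bcube u' v w by auto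
        moreover have "2*t < hamming v w" using far[OF v(1) w(1)] w by auto
        ultimately have "2*t < 40 + ?d" by linarith
        hence "(2*t - ?d) div 2 \<le> 20" by auto
        moreover have "q ^ ?d \<le> q^(2*t)" using False q by (intro power_increasing) auto
        ultimately have "q ^ ?d * vol q n ((2*t - ?d) div 2) \<le> b"
          unfolding b_def by (intro mult_le_mono vol_mono_r) auto
        thus ?thesis using ov_pair[OF uc(1) u'c(1), of t] adj by simp
      qed
    qed
    also have "\<dots> = (\<Sum>u'\<in>(T - B v) \<inter> {y\<in>S. adjG t y u}. b)"
      using fT by (subst sum.inter_restrict) auto
    also have "\<dots> \<le> D * b"
    proof -
      have "card ((T - B v) \<inter> {y\<in>S. adjG t y u}) \<le> card {y\<in>S. adjG t y u}"
        using fS by (intro card_mono) auto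
      also have "\<dots> \<le> D" unfolding D_def using deg_le_max[OF fS uc(2)] .
      finally show ?thesis by simp
    qed
    finally show ?thesis by simp
  qed
  have "card T * vol q n t = (\<Sum>u\<in>T. card (Ball q n t u))"
    using Tcube by (simp add: Ball_def ball_card subset_iff)
  also have "\<dots> \<le> card (\<Union>u\<in>T. Ball q n t u) + (\<Sum>u\<in>T. \<Sum>u'\<in>T-{u}. card (Ball q n t u \<inter> Ball q n t u'))"
    using fT by (intro union_lower) (auto simp: Ball_def intro: finite_subset[OF _ finite_cube])
  also have "card (\<Union>u\<in>T. Ball q n t u) \<le> q ^ n"
  proof -
    have "card (\<Union>u\<in>T. Ball q n t u) \<le> card (cube q n)"
      by (intro card_mono finite_cube) (auto simp: Ball_def)
    thus ?thesis by (simp add: card_cube)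
  qed
  also have "(\<Sum>u\<in>T. \<Sum>u'\<in>T-{u}. card (Ball q n t u \<inter> Ball q n t u')) \<le> (\<Sum>u\<in>T. m * a + D * b)"
    using inner by (intro sum_mono) auto
  also have "\<dots> = card T * (m * a + D * b)" by simp
  finally have main: "card T * vol q n t \<le> q ^ n + card T * (m * a + D * b)" by simp
  have "4 * (card T * (m * a + D * b)) \<le> 2 * (card T * vol q n t)"
  proof -
    have "4 * (m * a) \<le> vol q n t" using c1 unfolding a_def by (simp add: algebra_simps)
    moreover have "4 * (D * b) \<le> vol q n t" using c2 unfolding b_def D_def by (simp add: algebra_simps)
    ultimately have "4 * (m * a + D * b) \<le> 2 * vol q n t" by simp
    hence "card T * (4 * (m * a + D * b)) \<le> card T * (2 * vol q n t)" by simp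
    thus ?thesis by (simp add: algebra_simps)
  qed
  with main have "card T * vol q n t \<le> 2 * q^n" by linarith
  thus ?thesis using cardT by simp
qed



lemma ev_conds:
  fixes q :: nat and \<epsilon> :: real
  assumes "\<epsilon> > 0"
  shows "eventually (\<lambda>n::nat. 3 \<le> real n \<and>
     40 * real q^40 * (ln (real n) / \<epsilon> + 1) * sqrt (real n) + 10 * sqrt (real n) \<le> real n \<and>
     10 * real q^2 \<le> sqrt (real n) \<and>
     84 * real q^20 * (10 * real q^2)^60 \<le> real n ^ 5 \<and>
     2 / real n \<le> \<epsilon>) sequentially"
proof -
  have 1: "eventually (\<lambda>n::nat. 3 \<le> real n) sequentially" by real_asymp
  have 2: "eventually (\<lambda>n::nat. 40 * real q^40 * (ln (real n) / \<epsilon> + 1) * sqrt (real n) + 10 * sqrt (real n) \<le> real n) sequentially"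
    using assms by real_asymp
  have 3: "eventually (\<lambda>n::nat. 10 * real q^2 \<le> sqrt (real n)) sequentially" by real_asymp
  have 4: "eventually (\<lambda>n::nat. 84 * real q^20 * (10 * real q^2)^60 \<le> real n ^ 5) sequentially" by real_asymp
  have 5: "eventually (\<lambda>n::nat. 2 / real n \<le> \<epsilon>) sequentially" using assms by real_asymp
  show ?thesis using 1 2 3 4 5 by eventually_elim auto
qed


lemma degsum:
  assumes "finite S"
  shows "(\<Sum>k=1..20. real (degk S k v)) = real (card {u\<in>S. 1 \<le> hamming u v \<and> hamming u v \<le> 20})"
proof -
  have "(\<Sum>k=1..20. degk S k v) = (\<Sum>k\<in>{1..20}. \<Sum>u\<in>S. if hamming u v = k then 1 else (0::nat))"
    by (simp add: degk_def card_filter_sum assms)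
  also have "\<dots> = (\<Sum>u\<in>S. \<Sum>k\<in>{1..20}. if hamming u v = k then 1 else (0::nat))"
    by (rule sum.swap)
  also have "\<dots> = (\<Sum>u\<in>S. if 1 \<le> hamming u v \<and> hamming u v \<le> 20 then 1 else 0)"
    by (rule sum.cong) (auto simp: sum.delta')
  also have "\<dots> = card {u\<in>S. 1 \<le> hamming u v \<and> hamming u v \<le> 20}"
    by (simp add: card_filter_sum assms)
  finally show ?thesis by (simp only: of_nat_sum[symmetric] of_nat_eq_iff)
qed

lemma key:
  fixes q n t :: nat and \<epsilon> :: real and S :: "nat list set"
  assumes q: "q \<ge> 2" and \<epsilon>: "\<epsilon> > 0"
    and c_a: "3 \<le> real n"
    and c_b: "40 * real q^40 * (ln (real n) / \<epsilon> + 1) * sqrt (real n) + 10 * sqrt (real n) \<le> real n"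
    and c_c: "10 * real q^2 \<le> sqrt (real n)"
    and c_d: "84 * real q^20 * (10 * real q^2)^60 \<le> real n ^ 5"
    and c_e: "2 / real n \<le> \<epsilon>"
    and t1: "60 \<le> t" and t2: "real t \<le> 10 * sqrt (real n)"
    and S: "S \<subseteq> cube q n" and Dn: "max_deg t S \<le> n ^ 5"
  shows "real (num_indep t {v \<in> S. (\<Sum>k=1..20. real (degk S k v)) \<ge> ln (real n) / \<epsilon>})
           \<le> 2 powr (26 * \<epsilon> * hbound q n t)"
proof -
  define L where "L = ln (real n) / \<epsilon>"
  define S2 where "S2 = {v \<in> S. (\<Sum>k=1..20. real (degk S k v)) \<ge> L}"
  define A where "A v = {u\<in>S. 1 \<le> hamming u v \<and> hamming u v \<le> 20}" for v
  define m where "m = nat \<lceil>L\<rceil>"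
  define V where "V = real (vol q n t)"
  define H where "H = hbound q n t"
  have fS: "finite S" using S finite_subset finite_cube by blast
  have qr: "real q \<ge> 2" using q by simp
  have sq: "sqrt (real n) \<ge> 40"
  proof -
    have "(2::real)^2 \<le> real q^2" using qr by (intro power_mono) auto
    thus ?thesis using c_c by simp
  qed
  have nsq: "sqrt (real n) * sqrt (real n) = real n" by simp
  have tn: "real t < real n"
  proof -
    have "10 * sqrt (real n) < sqrt (real n) * sqrt (real n)" using sq c_a by (intro mult_strict_right_mono) auto
    thus ?thesis using t2 nsq by linarith
  qed
  hence tn': "t < n" by simp
  have lnpos: "ln (real n) > 0" using c_a by simp
  have Lpos: "L > 0" unfolding L_def using lnpos \<epsilon> by simp
  have m1: "real m \<ge> L" "real m \<le> L + 1"
    unfolding m_def using Lpos by (auto simp: of_nat_nat)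
  have Vpos: "V \<ge> 1"
  proof -
    have "vol q n 0 \<le> vol q n t" by (rule vol_mono_r) simp
    thus ?thesis unfolding V_def by (simp add: vol_n0)
  qed
  have H_def': "H = real (q^n) / V" unfolding H_def hbound_def V_def ..
  have Hnn: "H \<ge> 0" unfolding H_def' using Vpos by simp
  have c1: "4 * m * q^40 * vol q n (t-1) \<le> vol q n t"
  proof -
    define a where "a = real (vol q n (t-1))"
    have vr: "(real n - real t) * a \<le> real t * V"
    proof -
      have "(n - t) * vol q n (t - 1) \<le> t * vol q n t" using q t1 by (intro vol_ratio) auto
      hence "real ((n - t) * vol q n (t - 1)) \<le> real (t * vol q n t)" by (simp only: of_nat_le_iff)
      thus ?thesis using tn' unfolding a_def V_def by (simp add: of_nat_diff)
    qed
    have mt: "real m * real t \<le> (L + 1) * (10 * sqrt (real n))"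
      using m1 t2 Lpos by (intro mult_mono) auto
    have k1: "4 * real m * real q^40 * real t \<le> real n - real t"
    proof -
      have "4 * real q^40 * (real m * real t) \<le> 4 * real q^40 * ((L + 1) * (10 * sqrt (real n)))"
        using mt by (intro mult_left_mono) auto
      thus ?thesis using c_b t2 unfolding L_def by (simp add: algebra_simps)
    qed
    have "(real n - real t) * (4 * real m * real q^40 * a) = (4 * real m * real q^40) * ((real n - real t) * a)"
      by (simp add: algebra_simps)
    also have "\<dots> \<le> (4 * real m * real q^40) * (real t * V)" using vr by (intro mult_left_mono) auto
    also have "\<dots> = (4 * real m * real q^40 * real t) * V" by (simp add: algebra_simps)
    also have "\<dots> \<le> (real n - real t) * V" using k1 Vpos by (intro mult_right_mono) auto
    finally have "4 * real m * real q^40 * a \<le> V" using tn by (simp add: mult_le_cancel_left_pos)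
    hence "real (4 * m * q^40 * vol q n (t-1)) \<le> real (vol q n t)" unfolding a_def V_def by simp
    thus ?thesis by (simp only: of_nat_le_iff)
  qed
  have c2: "4 * max_deg t S * q^(2*t) * vol q n 20 \<le> vol q n t"
  proof -
    have nq: "n * q \<ge> 1" using tn' q by simp
    have v20: "real (vol q n 20) \<le> 21 * (real n * real q)^20"
    proof -
      have "real (vol q n 20) \<le> real (Suc 20 * (n * q) ^ 20)" using vol_small[OF nq, of 20] by (simp only: of_nat_le_iff)
      thus ?thesis by simp
    qed
    define B where "B = sqrt (real n) / (10 * real q^2)"
    have B1: "B \<ge> 1" unfolding B_def using c_c qr by simp
    have BB: "B \<le> real n / (real t * real q^2)"
    proof -
      have tpos: "real t > 0" using t1 by simp
      have "sqrt (real n) * (real t * real q^2) \<le> real n * (10 * real q^2)"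
      proof -
        have "sqrt (real n) * real t \<le> sqrt (real n) * (10 * sqrt (real n))" using t2 by (intro mult_left_mono) auto
        also have "\<dots> = 10 * real n" using nsq by (simp add: algebra_simps)
        finally have "sqrt (real n) * real t * real q^2 \<le> 10 * real n * real q^2" by (intro mult_right_mono) auto
        thus ?thesis by (simp add: algebra_simps)
      qed
      thus ?thesis unfolding B_def using tpos qr by (simp add: field_simps)
    qed
    have B60: "B^60 = real n ^ 30 / (10 * real q^2)^60"
    proof -
      have e: "(sqrt (real n) ^ 2) ^ 30 = sqrt (real n) ^ (2*30)" by (rule power_mult[symmetric])
      have "sqrt (real n) ^ 60 = (sqrt (real n) ^ 2) ^ 30" unfolding e by simp
      also have "\<dots> = real n ^ 30" by simp
      finally have "sqrt (real n) ^ 60 = real n ^ 30" .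
      thus ?thesis unfolding B_def by (simp add: power_divide)
    qed
    have lhs: "real (4 * max_deg t S * q^(2*t) * vol q n 20) \<le> 84 * real q^20 * real n^25 * real q^(2*t)"
    proof -
      have "real (4 * max_deg t S * q^(2*t) * vol q n 20) = 4 * real (max_deg t S) * real q^(2*t) * real (vol q n 20)" by simp
      also have "\<dots> \<le> 4 * real n^5 * real q^(2*t) * (21 * (real n * real q)^20)"
        using Dn v20 by (intro mult_mono) (auto simp flip: of_nat_power)
      also have "\<dots> = 84 * real q^20 * real n^25 * real q^(2*t)" by (simp add: power_mult_distrib algebra_simps)
      finally show ?thesis .
    qed
    have "84 * real q^20 * real n^25 \<le> B^60"
    proof -
      have "84 * real q^20 * (10 * real q^2)^60 * real n^25 \<le> real n^5 * real n^25"
        using c_d by (intro mult_right_mono) auto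
      hence "84 * real q^20 * real n^25 * (10 * real q^2)^60 \<le> real n^30" by (simp add: algebra_simps flip: power_add)
      thus ?thesis unfolding B60 using qr by (simp add: field_simps)
    qed
    also have "B^60 \<le> B^t" using B1 t1 by (intro power_increasing) auto
    also have "\<dots> \<le> (real n / (real t * real q^2))^t" using B1 BB by (intro power_mono) auto
    finally have "84 * real q^20 * real n^25 * real q^(2*t) \<le> (real n / (real t * real q^2))^t * real q^(2*t)"
      by (intro mult_right_mono) auto
    also have "\<dots> = (real n / real t)^t"
    proof -
      have pq: "real q^(2*t) = (real q^2)^t" by (rule power_mult)
      have "(real n / (real t * real q^2))^t * real q^(2*t) = (real n / (real t * real q^2) * real q^2)^t"
        unfolding pq by (simp only: power_mult_distrib)
      also have "real n / (real t * real q^2) * real q^2 = real n / real t" using qr by simp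
      finally show ?thesis .
    qed
    also have "\<dots> \<le> real (n choose t)" using tn' by (intro binomial_ge_n_over_k_pow_k) auto
    also have "\<dots> \<le> real (vol q n t)" using vol_lower[OF q] by simp
    finally show ?thesis using lhs by (simp only: of_nat_le_iff)
  qed
  have S2S: "S2 \<subseteq> S" unfolding S2_def by auto
  have mA: "m \<le> card (A v)" if "v \<in> S2" for v
  proof -
    have "L \<le> real (card (A v))" using that degsum[OF fS, of v] unfolding S2_def A_def by auto
    hence "\<lceil>L\<rceil> \<le> int (card (A v))" by (simp add: ceiling_le_iff)
    thus ?thesis unfolding m_def by (simp add: nat_le_iff)
  qed
  define K where "K = 2 * H / real m"
  have Ibound: "real (card I) \<le> K" if "I \<in> indep_sets t S2" for I
  proof -
    have I: "I \<subseteq> S2" "\<And>u v. u \<in> I \<Longrightarrow> v \<in> I \<Longrightarrow> \<not> adjG t u v" using that by (auto simp: indep_sets_def)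
    have "card I * m * vol q n t \<le> 2 * q^n"
    proof (rule indep_bound[OF q S _ _ _ _ c1 c2])
      show "21 \<le> t" using t1 by simp
      show "I \<subseteq> S" using I S2S by blast
      show "\<And>u v. u \<in> I \<Longrightarrow> v \<in> I \<Longrightarrow> \<not> adjG t u v" by (rule I(2))
      show "\<And>v. v \<in> I \<Longrightarrow> m \<le> card {u \<in> S. 1 \<le> hamming u v \<and> hamming u v \<le> 20}"
        using mA I(1) unfolding A_def by blast
    qed
    hence "real (card I * m * vol q n t) \<le> real (2 * q^n)" by (simp only: of_nat_le_iff)
    hence "real (card I) * real m * V \<le> 2 * real (q^n)" unfolding V_def by simp
    moreover have "real m > 0" using m1 Lpos by linarith
    ultimately show ?thesis unfolding K_def H_def' using Vpos by (simp add: field_simps)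
  qed
  have K_le: "6 * ln (real n) * K \<le> 12 * \<epsilon> * H"
  proof -
    have "K \<le> 2 * H / L" unfolding K_def using m1 Lpos Hnn by (intro divide_left_mono) auto
    hence "6 * ln (real n) * K \<le> 6 * ln (real n) * (2 * H / L)" using lnpos by (intro mult_left_mono) auto
    also have "\<dots> = 12 * \<epsilon> * H" unfolding L_def using lnpos \<epsilon> by (simp add: field_simps)
    finally show ?thesis .
  qed
  have Ssize: "real (card S) \<le> 2 * real n^5 * H"
  proof -
    have "card S * vol q n t \<le> q^n * (max_deg t S + 1)" by (rule S_size[OF S])
    also have "\<dots> \<le> q^n * (2 * n^5)"
    proof -
      have "1 \<le> n^5" using tn' by simp
      hence "max_deg t S + 1 \<le> 2 * n^5" using Dn by linarith
      thus ?thesis by (rule mult_le_mono2)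
    qed
    finally have "real (card S * vol q n t) \<le> real (q^n * (2 * n^5))" by (simp only: of_nat_le_iff)
    hence "real (card S) * V \<le> real (q^n) * (2 * real n^5)" unfolding V_def by simp
    thus ?thesis unfolding H_def' using Vpos by (simp add: field_simps)
  qed
  define x where "x = exp (- (6 * ln (real n)))"
  have xpos: "x > 0" unfolding x_def by simp
  have xn: "x * real n^6 = 1"
  proof -
    have e6: "exp (6 * ln (real n)) = real n ^ 6"
      using exp_of_nat_mult[of 6 "ln (real n)"] c_a by simp
    have "exp (6 * ln (real n)) * exp (- (6 * ln (real n))) = 1" by (rule exp_minus_inverse)
    thus ?thesis unfolding x_def e6 by (simp add: mult.commute)
  qed
  have fS2: "finite S2" using fS S2S finite_subset by blast
  have indPow: "indep_sets t S2 \<subseteq> Pow S2" by (auto simp: indep_sets_def)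
  have fin: "finite (indep_sets t S2)" using indPow fS2 finite_subset by blast
  have "real (num_indep t S2) = (\<Sum>I\<in>indep_sets t S2. 1)" by (simp add: num_indep_def)
  also have "\<dots> \<le> (\<Sum>I\<in>indep_sets t S2. x ^ card I * exp (6 * ln (real n) * K))"
  proof (rule sum_mono)
    fix I assume I: "I \<in> indep_sets t S2"
    have "x ^ card I = exp (real (card I) * (- (6 * ln (real n))))"
      unfolding x_def by (simp only: exp_of_nat_mult)
    hence "x ^ card I * exp (6 * ln (real n) * K) = exp (6 * ln (real n) * (K - real (card I)))"
      by (simp add: exp_add[symmetric] algebra_simps)
    moreover have "0 \<le> 6 * ln (real n) * (K - real (card I))" using Ibound[OF I] lnpos by simp
    ultimately show "1 \<le> x ^ card I * exp (6 * ln (real n) * K)" by simp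
  qed
  also have "\<dots> = exp (6 * ln (real n) * K) * (\<Sum>I\<in>indep_sets t S2. x ^ card I)"
    by (simp add: sum_distrib_right mult.commute)
  also have "(\<Sum>I\<in>indep_sets t S2. x ^ card I) \<le> (\<Sum>I\<in>Pow S2. x ^ card I)"
    using indPow xpos fS2 by (intro sum_mono2) auto
  also have "\<dots> = (1 + x) ^ card S2" by (rule pow_sum[OF fS2])
  also have "\<dots> \<le> exp x ^ card S2" using xpos by (intro power_mono) (auto simp: add.commute)
  also have "\<dots> = exp (real (card S2) * x)" by (simp add: exp_of_nat_mult)
  also have "\<dots> \<le> exp (\<epsilon> * H)"
  proof -
    have "real (card S2) \<le> real (card S)" using card_mono[OF fS S2S] by simp
    hence "real (card S2) * x \<le> 2 * real n^5 * H * x" using Ssize xpos by (intro mult_right_mono) auto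
    also have "\<dots> = 2 * H / real n"
    proof -
      have n6: "real n * real n ^ 5 = real n ^ 6" by (subst power_Suc[symmetric]) simp
      have "2 * real n^5 * H * x = 2 * H * (x * (real n * real n ^ 5)) / real n" using c_a by (simp add: field_simps)
      also have "\<dots> = 2 * H / real n" unfolding n6 xn by simp
      finally show ?thesis .
    qed
    also have "\<dots> \<le> \<epsilon> * H"
    proof -
      have "2 * H / real n = (2 / real n) * H" by simp
      also have "\<dots> \<le> \<epsilon> * H" using c_e Hnn by (intro mult_right_mono) auto
      finally show ?thesis .
    qed
    finally show ?thesis by simp
  qed
  finally have "real (num_indep t S2) \<le> exp (6 * ln (real n) * K) * exp (\<epsilon> * H)"
    by (simp add: mult_left_mono)
  also have "\<dots> \<le> exp (12 * \<epsilon> * H) * exp (\<epsilon> * H)" using K_le by (intro mult_right_mono) auto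
  also have "\<dots> = exp (13 * \<epsilon> * H)" by (simp add: exp_add[symmetric] algebra_simps)
  also have "\<dots> \<le> 2 powr (26 * \<epsilon> * H)"
  proof -
    have "1/2 \<le> ln (2::real)"
    proof -
      have "ln (exp (1/2)) \<le> ln (2::real)" using exp_half_le2 by (subst ln_le_cancel_iff) auto
      thus ?thesis by simp
    qed
    moreover have "0 \<le> 26 * \<epsilon> * H" using \<epsilon> Hnn by simp
    ultimately have "1/2 * (26 * \<epsilon> * H) \<le> ln 2 * (26 * \<epsilon> * H)" by (intro mult_right_mono)
    hence "13 * \<epsilon> * H \<le> ln 2 * (26 * \<epsilon> * H)" by simp
    thus ?thesis by (simp add: powr_def)
  qed
  finally show ?thesis unfolding S2_def L_def H_def .
qed


theorem lemma4p4:
  fixes q :: nat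
  assumes "q \<ge> 2"
  shows "\<exists>C>0::real. \<forall>\<epsilon>>0::real. \<exists>n0::nat. \<forall>n t S.
           n \<ge> n0 \<longrightarrow> 60 \<le> t \<longrightarrow> real t \<le> 10 * sqrt (real n) \<longrightarrow>
           S \<subseteq> cube q n \<longrightarrow> max_deg t S \<le> n ^ 5 \<longrightarrow>
           real (num_indep t {v \<in> S. (\<Sum>k=1..20. real (degk S k v)) \<ge> ln (real n) / \<epsilon>})
             \<le> 2 powr (C * \<epsilon> * hbound q n t)"
proof (intro exI[of _ "26::real"] conjI allI impI)
  show "(0::real) < 26" by simp
  fix \<epsilon> :: real assume \<epsilon>: "\<epsilon> > 0"
  obtain n0 where n0: "\<And>n. n \<ge> n0 \<Longrightarrow> 3 \<le> real n \<and>
     40 * real q^40 * (ln (real n) / \<epsilon> + 1) * sqrt (real n) + 10 * sqrt (real n) \<le> real n \<and>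
     10 * real q^2 \<le> sqrt (real n) \<and>
     84 * real q^20 * (10 * real q^2)^60 \<le> real n ^ 5 \<and>
     2 / real n \<le> \<epsilon>"
    using ev_conds[OF \<epsilon>, of q] unfolding eventually_sequentially by blast
  show "\<exists>n0::nat. \<forall>n t S.
           n \<ge> n0 \<longrightarrow> 60 \<le> t \<longrightarrow> real t \<le> 10 * sqrt (real n) \<longrightarrow>
           S \<subseteq> cube q n \<longrightarrow> max_deg t S \<le> n ^ 5 \<longrightarrow>
           real (num_indep t {v \<in> S. (\<Sum>k=1..20. real (degk S k v)) \<ge> ln (real n) / \<epsilon>})
             \<le> 2 powr (26 * \<epsilon> * hbound q n t)"
  proof (intro exI[of _ n0] allI impI)
    fix n t :: nat and S :: "nat list set"
    assume h: "n \<ge> n0" "60 \<le> t" "real t \<le> 10 * sqrt (real n)" "S \<subseteq> cube q n" "max_deg t S \<le> n ^ 5"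
    have c: "3 \<le> real n"
     "40 * real q^40 * (ln (real n) / \<epsilon> + 1) * sqrt (real n) + 10 * sqrt (real n) \<le> real n"
     "10 * real q^2 \<le> sqrt (real n)"
     "84 * real q^20 * (10 * real q^2)^60 \<le> real n ^ 5"
     "2 / real n \<le> \<epsilon>" using n0[OF h(1)] by auto
    show "real (num_indep t {v \<in> S. (\<Sum>k=1..20. real (degk S k v)) \<ge> ln (real n) / \<epsilon>})
             \<le> 2 powr (26 * \<epsilon> * hbound q n t)"
      by (rule key[OF assms \<epsilon> c h(2) h(3) h(4) h(5)])
  qed
qed

end
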